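(* Let $P$ denote the Petersen graph. For $i=0,\ldots,8$, let $P_i$ be a copy of the graph obtained from $P$ by deleting one edge $[u_i,v_i]$ (so $u_i,v_i$ are the two vertices of degree $2$ in $P_i$), the copies being pairwise vertex-disjoint. Let $G$ be the graph obtained from $P_0\cup\cdots\cup P_8$ by adding the edges $[v_i,u_{i+1}]$ for $i=0,\ldots,8$ (indices modulo $9$). Then $G$ is a bridgeless cubic graph of order $2n=90$ and $\chi'_{[44]}(G)\geq 5$, i.e. the edge set of $G$ cannot be covered by four matchings of size $n-1=44$.
   Context: All graphs are finite and simple. For a positive integer $k$, a $[k]$-matching of $G$ is a matching of $G$ with exactly $k$ edges. The excessive $[k]$-index $\chi'_{[k]}(G)$ is the minimum number of $[k]$-matchings of $G$ whose union is $E(G)$; if some edge of $G$ lies in no $[k]$-matching, one sets $\chi'_{[k]}(G)=\infty$. *)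

theory Defs
  imports Main "HOL-Library.Extended_Nat"
begin

definition simple_graph :: "'a set \<Rightarrow> 'a set set \<Rightarrow> bool" where
  "simple_graph V E \<longleftrightarrow> finite V \<and>
     (\<forall>e\<in>E. \<exists>u v. e = {u, v} \<and> u \<noteq> v \<and> u \<in> V \<and> v \<in> V)"

definition degree :: "'a set set \<Rightarrow> 'a \<Rightarrow> nat" where
  "degree E v = card {e\<in>E. v \<in> e}"

definition cubic :: "'a set \<Rightarrow> 'a set set \<Rightarrow> bool" where
  "cubic V E \<longleftrightarrow> (\<forall>v\<in>V. degree E v = 3)"

definition adj_rel :: "'a set set \<Rightarrow> ('a \<times> 'a) set" where
  "adj_rel E = {(u, v). {u, v} \<in> E}"

definition bridgeless :: "'a set \<Rightarrow> 'a set set \<Rightarrow> bool" where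
  "bridgeless V E \<longleftrightarrow> (\<forall>u v. {u, v} \<in> E \<longrightarrow> (u, v) \<in> (adj_rel (E - {{u, v}}))\<^sup>*)"

definition matching :: "'a set set \<Rightarrow> 'a set set \<Rightarrow> bool" where
  "matching E M \<longleftrightarrow> M \<subseteq> E \<and> (\<forall>e\<in>M. \<forall>f\<in>M. e \<noteq> f \<longrightarrow> e \<inter> f = {})"

definition k_matching :: "nat \<Rightarrow> 'a set set \<Rightarrow> 'a set set \<Rightarrow> bool" where
  "k_matching k E M \<longleftrightarrow> matching E M \<and> card M = k"

text \<open>Excessive [k]-index: minimum number of [k]-matchings whose union is E;
  infinity if no such finite family exists (Inf of the empty set of enat is infinity).\<close>
definition excessive_index :: "nat \<Rightarrow> 'a set set \<Rightarrow> enat" where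
  "excessive_index k E = Inf {enat t | t. \<exists>Ms :: 'a set set list.
      length Ms = t \<and> (\<forall>M\<in>set Ms. k_matching k E M) \<and> \<Union>(set Ms) = E}"

text \<open>Petersen graph on {0..9}: outer 5-cycle, spokes, inner pentagram.\<close>
definition petersen_edges :: "nat set set" where
  "petersen_edges =
     {{i, (i + 1) mod 5} | i. i < 5} \<union>
     {{i, i + 5} | i. i < 5} \<union>
     {{i + 5, (i + 2) mod 5 + 5} | i. i < 5}"

text \<open>Copy i of P minus the edge {0,1} (u_i = (i,0), v_i = (i,1)), i < 9,
  joined by the edges [v_i, u_{i+1 mod 9}].\<close>
definition G_vertices :: "(nat \<times> nat) set" where
  "G_vertices = {0..<9} \<times> {0..<10}"

definition G_edges :: "(nat \<times> nat) set set" where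
  "G_edges =
     {(\<lambda>x. (i, x)) ` e | i e. i < 9 \<and> e \<in> petersen_edges - {{0, 1}}} \<union>
     {{(i, 1), ((i + 1) mod 9, 0)} | i. i < 9}"

end

theory Submission
  imports Defs
begin


lemma five_set: "{f i |i. i < (5::nat)} = {f 0, f 1, f 2, f 3, f 4}"
  by (auto simp: less_Suc_eq numeral_eq_Suc)

definition Q :: "nat set set" where "Q = petersen_edges - {{0,1}}"

lemma Q_expl: "Q = {{1,2},{2,3},{3,4},{0,4},{0,5},{1,6},{2,7},{3,8},{4,9},{5,7},{6,8},{7,9},{5,8},{6,9}}"
  unfolding Q_def petersen_edges_def five_set
  apply (simp add: insert_commute)
  apply (simp add: numeral_2_eq_2 insert_Diff_if doubleton_eq_iff insert_commute)
  done

lemma prop_pm: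
  assumes "\<not> (b0 \<and> b1)"
  and "\<not> (b0 \<and> b5)"
  and "\<not> (b0 \<and> b6)"
  and "\<not> (b1 \<and> b2)"
  and "\<not> (b1 \<and> b6)"
  and "\<not> (b1 \<and> b7)"
  and "\<not> (b2 \<and> b3)"
  and "\<not> (b2 \<and> b7)"
  and "\<not> (b2 \<and> b8)"
  and "\<not> (b3 \<and> b4)"
  and "\<not> (b3 \<and> b8)"
  and "\<not> (b4 \<and> b9)"
  and "\<not> (b4 \<and> b12)"
  and "\<not> (b5 \<and> b10)"
  and "\<not> (b5 \<and> b13)"
  and "\<not> (b6 \<and> b9)"
  and "\<not> (b6 \<and> b11)"
  and "\<not> (b7 \<and> b10)"
  and "\<not> (b7 \<and> b12)"
  and "\<not> (b8 \<and> b11)"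
  and "\<not> (b8 \<and> b13)"
  and "\<not> (b9 \<and> b11)"
  and "\<not> (b9 \<and> b12)"
  and "\<not> (b10 \<and> b12)"
  and "\<not> (b10 \<and> b13)"
  and "\<not> (b11 \<and> b13)"
  and "b0 \<or> b1 \<or> b6"
  and "b1 \<or> b2 \<or> b7"
  and "b2 \<or> b3 \<or> b8"
  and "b4 \<or> b9 \<or> b12"
  and "b5 \<or> b10 \<or> b13"
  and "b6 \<or> b9 \<or> b11"
  and "b7 \<or> b10 \<or> b12"
  and "b8 \<or> b11 \<or> b13"
  shows "(b0 \<and> \<not> b1 \<and> b2 \<and> \<not> b3 \<and> b4 \<and> \<not> b5 \<and> \<not> b6 \<and> \<not> b7 \<and> \<not> b8 \<and> \<not> b9 \<and> b10 \<and> b11 \<and> \<not> b12 \<and> \<not> b13) \<or> (b0 \<and> \<not> b1 \<and> \<not> b2 \<and> b3 \<and> \<not> b4 \<and> \<not> b5 \<and> \<not> b6 \<and> b7 \<and> \<not> b8 \<and> b9 \<and> \<not> b10 \<and> \<not> b11 \<and> \<not> b12 \<and> b13) \<or> (\<not> b0 \<and> b1 \<and> \<not> b2 \<and> b3 \<and> \<not> b4 \<and> b5 \<and> \<not> b6 \<and> \<not> b7 \<and> \<not> b8 \<and> \<not> b9 \<and> \<not> b10 \<and> b11 \<and> b12 \<and> \<not> b13) \<or> (\<not> b0 \<and> \<not> b1 \<and> \<not> b2 \<and> \<not> b3 \<and> b4 \<and> b5 \<and> b6 \<and> b7 \<and> b8 \<and> \<not> b9 \<and> \<not> b10 \<and>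 \<not> b11 \<and> \<not> b12 \<and> \<not> b13) \<or> (\<not> b0 \<and> b1 \<and> \<not> b2 \<and> \<not> b3 \<and> \<not> b4 \<and> \<not> b5 \<and> \<not> b6 \<and> \<not> b7 \<and> b8 \<and> b9 \<and> b10 \<and> \<not> b11 \<and> \<not> b12 \<and> \<not> b13) \<or> (\<not> b0 \<and> \<not> b1 \<and> b2 \<and> \<not> b3 \<and> \<not> b4 \<and> \<not> b5 \<and> b6 \<and> \<not> b7 \<and> \<not> b8 \<and> \<not> b9 \<and> \<not> b10 \<and> \<not> b11 \<and> b12 \<and> b13)"
  using assms by sat
definition A :: "nat \<Rightarrow> nat set set" where
  "A k = (if k = 1 then {{1,2},{3,4},{0,5},{6,8},{7,9}} else if k = 2 then {{1,2},{0,4},{3,8},{5,7},{6,9}} else if k = 3 then {{2,3},{0,4},{1,6},{7,9},{5,8}} else if k = 4 then {{0,5},{1,6},{2,7},{3,8},{4,9}} else if k = 5 then {{2,3},{4,9},{5,7},{6,8}} else {{3,4},{2,7},{5,8},{6,9}})"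

lemma classify:
  assumes sub: "N \<subseteq> Q" and disj: "\<forall>e\<in>N. \<forall>f\<in>N. e \<noteq> f \<longrightarrow> e \<inter> f = {}"
    and cov: "\<forall>x\<in>{2..9}. \<exists>e\<in>N. x \<in> e"
  shows "\<exists>k\<in>{1..6}. N = A k"
proof -
  have c0: "\<not> ({1,2} \<in> N \<and> {2,3} \<in> N)" using disj[rule_format, of "{1,2}" "{2,3}"] by (auto simp: doubleton_eq_iff)
  have c1: "\<not> ({1,2} \<in> N \<and> {1,6} \<in> N)" using disj[rule_format, of "{1,2}" "{1,6}"] by (auto simp: doubleton_eq_iff)
  have c2: "\<not> ({1,2} \<in> N \<and> {2,7} \<in> N)" using disj[rule_format, of "{1,2}" "{2,7}"] by (auto simp: doubleton_eq_iff)
  have c3: "\<not> ({2,3} \<in> N \<and> {3,4} \<in> N)" using disj[rule_format, of "{2,3}" "{3,4}"] by (auto simp: doubleton_eq_iff)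
  have c4: "\<not> ({2,3} \<in> N \<and> {2,7} \<in> N)" using disj[rule_format, of "{2,3}" "{2,7}"] by (auto simp: doubleton_eq_iff)
  have c5: "\<not> ({2,3} \<in> N \<and> {3,8} \<in> N)" using disj[rule_format, of "{2,3}" "{3,8}"] by (auto simp: doubleton_eq_iff)
  have c6: "\<not> ({3,4} \<in> N \<and> {0,4} \<in> N)" using disj[rule_format, of "{3,4}" "{0,4}"] by (auto simp: doubleton_eq_iff)
  have c7: "\<not> ({3,4} \<in> N \<and> {3,8} \<in> N)" using disj[rule_format, of "{3,4}" "{3,8}"] by (auto simp: doubleton_eq_iff)
  have c8: "\<not> ({3,4} \<in> N \<and> {4,9} \<in> N)" using disj[rule_format, of "{3,4}" "{4,9}"] by (auto simp: doubleton_eq_iff)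
  have c9: "\<not> ({0,4} \<in> N \<and> {0,5} \<in> N)" using disj[rule_format, of "{0,4}" "{0,5}"] by (auto simp: doubleton_eq_iff)
  have c10: "\<not> ({0,4} \<in> N \<and> {4,9} \<in> N)" using disj[rule_format, of "{0,4}" "{4,9}"] by (auto simp: doubleton_eq_iff)
  have c11: "\<not> ({0,5} \<in> N \<and> {5,7} \<in> N)" using disj[rule_format, of "{0,5}" "{5,7}"] by (auto simp: doubleton_eq_iff)
  have c12: "\<not> ({0,5} \<in> N \<and> {5,8} \<in> N)" using disj[rule_format, of "{0,5}" "{5,8}"] by (auto simp: doubleton_eq_iff)
  have c13: "\<not> ({1,6} \<in> N \<and> {6,8} \<in> N)" using disj[rule_format, of "{1,6}" "{6,8}"] by (auto simp: doubleton_eq_iff)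
  have c14: "\<not> ({1,6} \<in> N \<and> {6,9} \<in> N)" using disj[rule_format, of "{1,6}" "{6,9}"] by (auto simp: doubleton_eq_iff)
  have c15: "\<not> ({2,7} \<in> N \<and> {5,7} \<in> N)" using disj[rule_format, of "{2,7}" "{5,7}"] by (auto simp: doubleton_eq_iff)
  have c16: "\<not> ({2,7} \<in> N \<and> {7,9} \<in> N)" using disj[rule_format, of "{2,7}" "{7,9}"] by (auto simp: doubleton_eq_iff)
  have c17: "\<not> ({3,8} \<in> N \<and> {6,8} \<in> N)" using disj[rule_format, of "{3,8}" "{6,8}"] by (auto simp: doubleton_eq_iff)
  have c18: "\<not> ({3,8} \<in> N \<and> {5,8} \<in> N)" using disj[rule_format, of "{3,8}" "{5,8}"] by (auto simp: doubleton_eq_iff)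
  have c19: "\<not> ({4,9} \<in> N \<and> {7,9} \<in> N)" using disj[rule_format, of "{4,9}" "{7,9}"] by (auto simp: doubleton_eq_iff)
  have c20: "\<not> ({4,9} \<in> N \<and> {6,9} \<in> N)" using disj[rule_format, of "{4,9}" "{6,9}"] by (auto simp: doubleton_eq_iff)
  have c21: "\<not> ({5,7} \<in> N \<and> {7,9} \<in> N)" using disj[rule_format, of "{5,7}" "{7,9}"] by (auto simp: doubleton_eq_iff)
  have c22: "\<not> ({5,7} \<in> N \<and> {5,8} \<in> N)" using disj[rule_format, of "{5,7}" "{5,8}"] by (auto simp: doubleton_eq_iff)
  have c23: "\<not> ({6,8} \<in> N \<and> {5,8} \<in> N)" using disj[rule_format, of "{6,8}" "{5,8}"] by (auto simp: doubleton_eq_iff)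
  have c24: "\<not> ({6,8} \<in> N \<and> {6,9} \<in> N)" using disj[rule_format, of "{6,8}" "{6,9}"] by (auto simp: doubleton_eq_iff)
  have c25: "\<not> ({7,9} \<in> N \<and> {6,9} \<in> N)" using disj[rule_format, of "{7,9}" "{6,9}"] by (auto simp: doubleton_eq_iff)
  have v2: "{1,2} \<in> N \<or> {2,3} \<in> N \<or> {2,7} \<in> N" using cov[rule_format, of 2] sub by (auto simp: Q_expl)
  have v3: "{2,3} \<in> N \<or> {3,4} \<in> N \<or> {3,8} \<in> N" using cov[rule_format, of 3] sub by (auto simp: Q_expl)
  have v4: "{3,4} \<in> N \<or> {0,4} \<in> N \<or> {4,9} \<in> N" using cov[rule_format, of 4] sub by (auto simp: Q_expl)
  have v5: "{0,5} \<in> N \<or> {5,7} \<in> N \<or> {5,8} \<in> N" using cov[rule_format, of 5] sub by (auto simp: Q_expl)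
  have v6: "{1,6} \<in> N \<or> {6,8} \<in> N \<or> {6,9} \<in> N" using cov[rule_format, of 6] sub by (auto simp: Q_expl)
  have v7: "{2,7} \<in> N \<or> {5,7} \<in> N \<or> {7,9} \<in> N" using cov[rule_format, of 7] sub by (auto simp: Q_expl)
  have v8: "{3,8} \<in> N \<or> {6,8} \<in> N \<or> {5,8} \<in> N" using cov[rule_format, of 8] sub by (auto simp: Q_expl)
  have v9: "{4,9} \<in> N \<or> {7,9} \<in> N \<or> {6,9} \<in> N" using cov[rule_format, of 9] sub by (auto simp: Q_expl)
  have "({1,2} \<in> N \<and> \<not> {2,3} \<in> N \<and> {3,4} \<in> N \<and> \<not> {0,4} \<in> N \<and> {0,5} \<in> N \<and> \<not> {1,6} \<in> N \<and> \<not> {2,7} \<in> N \<and> \<not> {3,8} \<in> N \<and> \<not> {4,9} \<in> N \<and> \<not> {5,7} \<in> N \<and> {6,8} \<in> N \<and> {7,9} \<in> N \<and> \<not> {5,8} \<in> N \<and> \<not> {6,9} \<in> N) \<or> ({1,2} \<in> N \<and> \<not> {2,3} \<in> N \<and> \<not> {3,4} \<in> N \<and> {0,4} \<in> N \<and> \<not> {0,5} \<in> N \<and> \<not> {1,6} \<in> N \<and> \<not> {2,7} \<in> N \<and> {3,8} \<in> N \<and> \<not> {4,9} \<in> N \<and> {5,7} \<in> N \<and> \<not> {6,8} \<in> N \<and> \<not> {7,9} \<in> N \<and> \<not> {5,8} \<in> N \<and> {6,9} \<in> N) \<or> (\<not> {1,2} \<in> N \<and> {2,3} \<in> N \<and>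 \<not> {3,4} \<in> N \<and> {0,4} \<in> N \<and> \<not> {0,5} \<in> N \<and> {1,6} \<in> N \<and> \<not> {2,7} \<in> N \<and> \<not> {3,8} \<in> N \<and> \<not> {4,9} \<in> N \<and> \<not> {5,7} \<in> N \<and> \<not> {6,8} \<in> N \<and> {7,9} \<in> N \<and> {5,8} \<in> N \<and> \<not> {6,9} \<in> N) \<or> (\<not> {1,2} \<in> N \<and> \<not> {2,3} \<in> N \<and> \<not> {3,4} \<in> N \<and> \<not> {0,4} \<in> N \<and> {0,5} \<in> N \<and> {1,6} \<in> N \<and> {2,7} \<in> N \<and> {3,8} \<in> N \<and> {4,9} \<in> N \<and> \<not> {5,7} \<in> N \<and> \<not> {6,8} \<in> N \<and> \<not> {7,9} \<in> N \<and> \<not> {5,8} \<in> N \<and> \<not> {6,9} \<in> N) \<or> (\<not> {1,2} \<in> N \<and> {2,3} \<in> N \<and> \<not> {3,4} \<in> N \<and> \<not> {0,4} \<in> N \<and> \<not> {0,5} \<in> N \<and> \<not> {1,6} \<in> N \<and> \<not> {2,7} \<in> N \<and> \<not> {3,8} \<in> N \<and> {4,9} \<in> N \<and> {5,7} \<in> N \<and> {6,8} \<in> N \<and> \<not> {7,9} \<in> N \<and> \<not> {5,8} \<in> N \<and> \<not> {6,9} \<in> N) \<or> (\<not> {1,2} \<in> N \<and> \<not> {2,3} \<in> N \<and> {3,4} \<in> N \<and> \<not> {0,4} \<in> N \<and> \<not> {0,5} \<in> N \<and> \<not> {1,6} \<in> N \<and> {2,7} \<in> N \<and> \<not> {3,8}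 \<in> N \<and> \<not> {4,9} \<in> N \<and> \<not> {5,7} \<in> N \<and> \<not> {6,8} \<in> N \<and> \<not> {7,9} \<in> N \<and> {5,8} \<in> N \<and> {6,9} \<in> N)" using c0 c1 c2 c3 c4 c5 c6 c7 c8 c9 c10 c11 c12 c13 c14 c15 c16 c17 c18 c19 c20 c21 c22 c23 c24 c25 v2 v3 v4 v5 v6 v7 v8 v9 by sat
  then show ?thesis
  proof (elim disjE)
    assume h: "{1,2} \<in> N \<and> \<not> {2,3} \<in> N \<and> {3,4} \<in> N \<and> \<not> {0,4} \<in> N \<and> {0,5} \<in> N \<and> \<not> {1,6} \<in> N \<and> \<not> {2,7} \<in> N \<and> \<not> {3,8} \<in> N \<and> \<not> {4,9} \<in> N \<and> \<not> {5,7} \<in> N \<and> {6,8} \<in> N \<and> {7,9} \<in> N \<and> \<not> {5,8} \<in> N \<and> \<not> {6,9} \<in> N"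
    have "N = A 1"
    proof (rule set_eqI, rule iffI)
      fix e assume e: "e \<in> N"
      then have "e \<in> Q" using sub by auto
      then have "e = {1,2} \<or> e = {2,3} \<or> e = {3,4} \<or> e = {0,4} \<or> e = {0,5} \<or> e = {1,6} \<or> e = {2,7} \<or> e = {3,8} \<or> e = {4,9} \<or> e = {5,7} \<or> e = {6,8} \<or> e = {7,9} \<or> e = {5,8} \<or> e = {6,9}" by (simp add: Q_expl)
      then show "e \<in> A 1" using h e by (elim disjE) (simp_all add: A_def)
    next
      fix e assume "e \<in> A 1"
      then show "e \<in> N" using h by (simp add: A_def) (elim disjE; simp)
    qed
    then show ?thesis by force
  next
    assume h: "{1,2} \<in> N \<and> \<not> {2,3} \<in> N \<and> \<not> {3,4} \<in> N \<and> {0,4} \<in> N \<and> \<not> {0,5} \<in> N \<and> \<not> {1,6} \<in> N \<and> \<not> {2,7} \<in> N \<and> {3,8} \<in> N \<and> \<not> {4,9} \<in> N \<and> {5,7} \<in> N \<and> \<not> {6,8} \<in> N \<and> \<not> {7,9} \<in> N \<and> \<not> {5,8} \<in> N \<and> {6,9} \<in> N"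
    have "N = A 2"
    proof (rule set_eqI, rule iffI)
      fix e assume e: "e \<in> N"
      then have "e \<in> Q" using sub by auto
      then have "e = {1,2} \<or> e = {2,3} \<or> e = {3,4} \<or> e = {0,4} \<or> e = {0,5} \<or> e = {1,6} \<or> e = {2,7} \<or> e = {3,8} \<or> e = {4,9} \<or> e = {5,7} \<or> e = {6,8} \<or> e = {7,9} \<or> e = {5,8} \<or> e = {6,9}" by (simp add: Q_expl)
      then show "e \<in> A 2" using h e by (elim disjE) (simp_all add: A_def)
    next
      fix e assume "e \<in> A 2"
      then show "e \<in> N" using h by (simp add: A_def) (elim disjE; simp)
    qed
    then show ?thesis by force
  next
    assume h: "\<not> {1,2} \<in> N \<and> {2,3} \<in> N \<and> \<not> {3,4} \<in> N \<and> {0,4} \<in> N \<and> \<not> {0,5} \<in> N \<and> {1,6} \<in> N \<and> \<not> {2,7} \<in> N \<and> \<not> {3,8} \<in> N \<and> \<not> {4,9} \<in> N \<and> \<not> {5,7} \<in> N \<and> \<not> {6,8} \<in> N \<and> {7,9} \<in> N \<and> {5,8} \<in> N \<and> \<not> {6,9} \<in> N"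
    have "N = A 3"
    proof (rule set_eqI, rule iffI)
      fix e assume e: "e \<in> N"
      then have "e \<in> Q" using sub by auto
      then have "e = {1,2} \<or> e = {2,3} \<or> e = {3,4} \<or> e = {0,4} \<or> e = {0,5} \<or> e = {1,6} \<or> e = {2,7} \<or> e = {3,8} \<or> e = {4,9} \<or> e = {5,7} \<or> e = {6,8} \<or> e = {7,9} \<or> e = {5,8} \<or> e = {6,9}" by (simp add: Q_expl)
      then show "e \<in> A 3" using h e by (elim disjE) (simp_all add: A_def)
    next
      fix e assume "e \<in> A 3"
      then show "e \<in> N" using h by (simp add: A_def) (elim disjE; simp)
    qed
    then show ?thesis by force
  next
    assume h: "\<not> {1,2} \<in> N \<and> \<not> {2,3} \<in> N \<and> \<not> {3,4} \<in> N \<and> \<not> {0,4} \<in> N \<and> {0,5} \<in> N \<and> {1,6} \<in> N \<and> {2,7} \<in> N \<and> {3,8} \<in> N \<and> {4,9} \<in> N \<and> \<not> {5,7} \<in> N \<and> \<not> {6,8} \<in> N \<and> \<not> {7,9} \<in> N \<and> \<not> {5,8} \<in> N \<and> \<not> {6,9} \<in> N"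
    have "N = A 4"
    proof (rule set_eqI, rule iffI)
      fix e assume e: "e \<in> N"
      then have "e \<in> Q" using sub by auto
      then have "e = {1,2} \<or> e = {2,3} \<or> e = {3,4} \<or> e = {0,4} \<or> e = {0,5} \<or> e = {1,6} \<or> e = {2,7} \<or> e = {3,8} \<or> e = {4,9} \<or> e = {5,7} \<or> e = {6,8} \<or> e = {7,9} \<or> e = {5,8} \<or> e = {6,9}" by (simp add: Q_expl)
      then show "e \<in> A 4" using h e by (elim disjE) (simp_all add: A_def)
    next
      fix e assume "e \<in> A 4"
      then show "e \<in> N" using h by (simp add: A_def) (elim disjE; simp)
    qed
    then show ?thesis by force
  next
    assume h: "\<not> {1,2} \<in> N \<and> {2,3} \<in> N \<and> \<not> {3,4} \<in> N \<and> \<not> {0,4} \<in> N \<and> \<not> {0,5} \<in> N \<and> \<not> {1,6} \<in> N \<and> \<not> {2,7} \<in> N \<and> \<not> {3,8} \<in> N \<and> {4,9} \<in> N \<and> {5,7} \<in> N \<and> {6,8} \<in> N \<and> \<not> {7,9} \<in> N \<and> \<not> {5,8} \<in> N \<and> \<not> {6,9} \<in> N"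
    have "N = A 5"
    proof (rule set_eqI, rule iffI)
      fix e assume e: "e \<in> N"
      then have "e \<in> Q" using sub by auto
      then have "e = {1,2} \<or> e = {2,3} \<or> e = {3,4} \<or> e = {0,4} \<or> e = {0,5} \<or> e = {1,6} \<or> e = {2,7} \<or> e = {3,8} \<or> e = {4,9} \<or> e = {5,7} \<or> e = {6,8} \<or> e = {7,9} \<or> e = {5,8} \<or> e = {6,9}" by (simp add: Q_expl)
      then show "e \<in> A 5" using h e by (elim disjE) (simp_all add: A_def)
    next
      fix e assume "e \<in> A 5"
      then show "e \<in> N" using h by (simp add: A_def) (elim disjE; simp)
    qed
    then show ?thesis by force
  next
    assume h: "\<not> {1,2} \<in> N \<and> \<not> {2,3} \<in> N \<and> {3,4} \<in> N \<and> \<not> {0,4} \<in> N \<and> \<not> {0,5} \<in> N \<and> \<not> {1,6} \<in> N \<and> {2,7} \<in> N \<and> \<not> {3,8} \<in> N \<and> \<not> {4,9} \<in> N \<and> \<not> {5,7} \<in> N \<and> \<not> {6,8} \<in> N \<and> \<not> {7,9} \<in> N \<and> {5,8} \<in> N \<and> {6,9} \<in> N"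
    have "N = A 6"
    proof (rule set_eqI, rule iffI)
      fix e assume e: "e \<in> N"
      then have "e \<in> Q" using sub by auto
      then have "e = {1,2} \<or> e = {2,3} \<or> e = {3,4} \<or> e = {0,4} \<or> e = {0,5} \<or> e = {1,6} \<or> e = {2,7} \<or> e = {3,8} \<or> e = {4,9} \<or> e = {5,7} \<or> e = {6,8} \<or> e = {7,9} \<or> e = {5,8} \<or> e = {6,9}" by (simp add: Q_expl)
      then show "e \<in> A 6" using h e by (elim disjE) (simp_all add: A_def)
    next
      fix e assume "e \<in> A 6"
      then show "e \<in> N" using h by (simp add: A_def) (elim disjE; simp)
    qed
    then show ?thesis by force
  qed
qed
lemma prop_cov:
  assumes "b1 \<or> b2"
  and "b3 \<or> b5"
  and "b1 \<or> b6"
  and "b2 \<or> b3"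
  and "b1 \<or> b4"
  and "b3 \<or> b4"
  and "b4 \<or> b6"
  and "b2 \<or> b4"
  and "b4 \<or> b5"
  and "b2 \<or> b5"
  and "b1 \<or> b5"
  and "b1 \<or> b3"
  and "b3 \<or> b6"
  and "b2 \<or> b6"
  and "b5 \<or> b6"
  shows "(b1 \<and> b2 \<and> b3 \<and> b4 \<and> b5) \<or> (b1 \<and> b2 \<and> b3 \<and> b4 \<and> b6) \<or> (b1 \<and> b2 \<and> b3 \<and> b5 \<and> b6) \<or> (b1 \<and> b2 \<and> b4 \<and> b5 \<and> b6) \<or> (b1 \<and> b3 \<and> b4 \<and> b5 \<and> b6) \<or> (b2 \<and> b3 \<and> b4 \<and> b5 \<and> b6)"
  using assms by sat

lemma one6: "(k::nat) \<in> {1..6} \<longleftrightarrow> k = 1 \<or> k = 2 \<or> k = 3 \<or> k = 4 \<or> k = 5 \<or> k = 6" by auto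

lemma A_inj: "inj_on A {1..6}"
proof (rule inj_onI)
  fix k l assume k: "k \<in> {1..6}" and l: "l \<in> {1..6}" and eq: "A k = A l"
  then have "({0,5} \<in> A k \<longleftrightarrow> {0,5} \<in> A l) \<and> ({1,2} \<in> A k \<longleftrightarrow> {1,2} \<in> A l) \<and> ({2,3} \<in> A k \<longleftrightarrow> {2,3} \<in> A l) \<and> ({3,4} \<in> A k \<longleftrightarrow> {3,4} \<in> A l) \<and> ({0,4} \<in> A k \<longleftrightarrow> {0,4} \<in> A l)" by simp
  then show "k = l" using k l unfolding one6 by (elim disjE; simp add: A_def doubleton_eq_iff)
qed

lemma petersen_cover:
  assumes fin: "finite NN" and cardN: "card NN \<le> 4"
  and pm: "\<forall>N\<in>NN. N \<subseteq> Q \<and> (\<forall>e\<in>N. \<forall>f\<in>N. e \<noteq> f \<longrightarrow> e \<inter> f = {}) \<and> (\<forall>x\<in>{2..9}. \<exists>e\<in>N. x \<in> e)"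
  and covQ: "\<forall>e\<in>Q. \<exists>N\<in>NN. e \<in> N"
  and zero: "\<exists>N\<in>NN. \<forall>e\<in>N. 0 \<notin> e"
  shows False
proof -
  have cls: "\<forall>N\<in>NN. \<exists>k\<in>{1..6}. N = A k"
  proof
    fix N assume "N \<in> NN"
    note h = pm[rule_format, OF this]
    show "\<exists>k\<in>{1..6}. N = A k"
      by (rule classify[OF h[THEN conjunct1] h[THEN conjunct2, THEN conjunct1] h[THEN conjunct2, THEN conjunct2]])
  qed
  define K where "K = {k\<in>{1..6}. A k \<in> NN}"
  have finK: "finite K" unfolding K_def by auto
  have "card K \<le> card NN"
    by (rule card_inj_on_le[OF inj_on_subset[OF A_inj]]) (use fin in \<open>auto simp: K_def\<close>)
  with cardN have cK: "card K \<le> 4" by simp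
  have edge: "\<exists>k\<in>K. e \<in> A k" if "e \<in> Q" for e
  proof -
    from covQ that obtain N where N: "N \<in> NN" "e \<in> N" by blast
    from cls N(1) obtain k where k: "k \<in> {1..6}" "N = A k" by blast
    have "k \<in> K" unfolding K_def using k N(1) by simp
    then show ?thesis using k(2) N(2) by blast
  qed
  have e0: "1 \<in> K \<or> 2 \<in> K"
  proof -
    have "{1,2} \<in> Q" by (simp add: Q_expl)
    then obtain k where k: "k \<in> K" "{1,2} \<in> A k" using edge by blast
    then have "k \<in> {1..6}" unfolding K_def by simp
    then have "k = 1 \<or> k = 2" using k(2) unfolding one6 by (elim disjE; simp add: A_def doubleton_eq_iff)
    then show ?thesis using k(1) by blast
  qed
  have e1: "3 \<in> K \<or> 5 \<in> K"
  proof -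
    have "{2,3} \<in> Q" by (simp add: Q_expl)
    then obtain k where k: "k \<in> K" "{2,3} \<in> A k" using edge by blast
    then have "k \<in> {1..6}" unfolding K_def by simp
    then have "k = 3 \<or> k = 5" using k(2) unfolding one6 by (elim disjE; simp add: A_def doubleton_eq_iff)
    then show ?thesis using k(1) by blast
  qed
  have e2: "1 \<in> K \<or> 6 \<in> K"
  proof -
    have "{3,4} \<in> Q" by (simp add: Q_expl)
    then obtain k where k: "k \<in> K" "{3,4} \<in> A k" using edge by blast
    then have "k \<in> {1..6}" unfolding K_def by simp
    then have "k = 1 \<or> k = 6" using k(2) unfolding one6 by (elim disjE; simp add: A_def doubleton_eq_iff)
    then show ?thesis using k(1) by blast
  qed
  have e3: "2 \<in> K \<or> 3 \<in> K"
  proof -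
    have "{0,4} \<in> Q" by (simp add: Q_expl)
    then obtain k where k: "k \<in> K" "{0,4} \<in> A k" using edge by blast
    then have "k \<in> {1..6}" unfolding K_def by simp
    then have "k = 2 \<or> k = 3" using k(2) unfolding one6 by (elim disjE; simp add: A_def doubleton_eq_iff)
    then show ?thesis using k(1) by blast
  qed
  have e4: "1 \<in> K \<or> 4 \<in> K"
  proof -
    have "{0,5} \<in> Q" by (simp add: Q_expl)
    then obtain k where k: "k \<in> K" "{0,5} \<in> A k" using edge by blast
    then have "k \<in> {1..6}" unfolding K_def by simp
    then have "k = 1 \<or> k = 4" using k(2) unfolding one6 by (elim disjE; simp add: A_def doubleton_eq_iff)
    then show ?thesis using k(1) by blast
  qed
  have e5: "3 \<in> K \<or> 4 \<in> K"
  proof -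
    have "{1,6} \<in> Q" by (simp add: Q_expl)
    then obtain k where k: "k \<in> K" "{1,6} \<in> A k" using edge by blast
    then have "k \<in> {1..6}" unfolding K_def by simp
    then have "k = 3 \<or> k = 4" using k(2) unfolding one6 by (elim disjE; simp add: A_def doubleton_eq_iff)
    then show ?thesis using k(1) by blast
  qed
  have e6: "4 \<in> K \<or> 6 \<in> K"
  proof -
    have "{2,7} \<in> Q" by (simp add: Q_expl)
    then obtain k where k: "k \<in> K" "{2,7} \<in> A k" using edge by blast
    then have "k \<in> {1..6}" unfolding K_def by simp
    then have "k = 4 \<or> k = 6" using k(2) unfolding one6 by (elim disjE; simp add: A_def doubleton_eq_iff)
    then show ?thesis using k(1) by blast
  qed
  have e7: "2 \<in> K \<or> 4 \<in> K"
  proof -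
    have "{3,8} \<in> Q" by (simp add: Q_expl)
    then obtain k where k: "k \<in> K" "{3,8} \<in> A k" using edge by blast
    then have "k \<in> {1..6}" unfolding K_def by simp
    then have "k = 2 \<or> k = 4" using k(2) unfolding one6 by (elim disjE; simp add: A_def doubleton_eq_iff)
    then show ?thesis using k(1) by blast
  qed
  have e8: "4 \<in> K \<or> 5 \<in> K"
  proof -
    have "{4,9} \<in> Q" by (simp add: Q_expl)
    then obtain k where k: "k \<in> K" "{4,9} \<in> A k" using edge by blast
    then have "k \<in> {1..6}" unfolding K_def by simp
    then have "k = 4 \<or> k = 5" using k(2) unfolding one6 by (elim disjE; simp add: A_def doubleton_eq_iff)
    then show ?thesis using k(1) by blast
  qed
  have e9: "2 \<in> K \<or> 5 \<in> K"
  proof -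
    have "{5,7} \<in> Q" by (simp add: Q_expl)
    then obtain k where k: "k \<in> K" "{5,7} \<in> A k" using edge by blast
    then have "k \<in> {1..6}" unfolding K_def by simp
    then have "k = 2 \<or> k = 5" using k(2) unfolding one6 by (elim disjE; simp add: A_def doubleton_eq_iff)
    then show ?thesis using k(1) by blast
  qed
  have e10: "1 \<in> K \<or> 5 \<in> K"
  proof -
    have "{6,8} \<in> Q" by (simp add: Q_expl)
    then obtain k where k: "k \<in> K" "{6,8} \<in> A k" using edge by blast
    then have "k \<in> {1..6}" unfolding K_def by simp
    then have "k = 1 \<or> k = 5" using k(2) unfolding one6 by (elim disjE; simp add: A_def doubleton_eq_iff)
    then show ?thesis using k(1) by blast
  qed
  have e11: "1 \<in> K \<or> 3 \<in> K"
  proof -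
    have "{7,9} \<in> Q" by (simp add: Q_expl)
    then obtain k where k: "k \<in> K" "{7,9} \<in> A k" using edge by blast
    then have "k \<in> {1..6}" unfolding K_def by simp
    then have "k = 1 \<or> k = 3" using k(2) unfolding one6 by (elim disjE; simp add: A_def doubleton_eq_iff)
    then show ?thesis using k(1) by blast
  qed
  have e12: "3 \<in> K \<or> 6 \<in> K"
  proof -
    have "{5,8} \<in> Q" by (simp add: Q_expl)
    then obtain k where k: "k \<in> K" "{5,8} \<in> A k" using edge by blast
    then have "k \<in> {1..6}" unfolding K_def by simp
    then have "k = 3 \<or> k = 6" using k(2) unfolding one6 by (elim disjE; simp add: A_def doubleton_eq_iff)
    then show ?thesis using k(1) by blast
  qed
  have e13: "2 \<in> K \<or> 6 \<in> K"
  proof -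
    have "{6,9} \<in> Q" by (simp add: Q_expl)
    then obtain k where k: "k \<in> K" "{6,9} \<in> A k" using edge by blast
    then have "k \<in> {1..6}" unfolding K_def by simp
    then have "k = 2 \<or> k = 6" using k(2) unfolding one6 by (elim disjE; simp add: A_def doubleton_eq_iff)
    then show ?thesis using k(1) by blast
  qed
  have z: "5 \<in> K \<or> 6 \<in> K"
  proof -
    obtain N where N: "N \<in> NN" "\<forall>e\<in>N. 0 \<notin> e" using zero by blast
    then obtain k where k: "k \<in> {1..6}" "N = A k" using cls by blast
    then have "k \<in> K" using N unfolding K_def by simp
    moreover have "k = 5 \<or> k = 6" using k N unfolding one6 by (elim disjE; simp add: A_def)
    ultimately show ?thesis by blast
  qed
  have "(1 \<in> K \<and> 2 \<in> K \<and> 3 \<in> K \<and> 4 \<in> K \<and> 5 \<in> K) \<or> (1 \<in> K \<and> 2 \<in> K \<and> 3 \<in> K \<and> 4 \<in> K \<and> 6 \<in> K) \<or> (1 \<in> K \<and> 2 \<in> K \<and> 3 \<in> K \<and> 5 \<in> K \<and> 6 \<in> K) \<or> (1 \<in> K \<and> 2 \<in> K \<and> 4 \<in> K \<and> 5 \<in> K \<and> 6 \<in> K) \<or> (1 \<in> K \<and> 3 \<in> K \<and> 4 \<in> K \<and> 5 \<in> K \<and> 6 \<in> K) \<or> (2 \<in> K \<and> 3 \<in> K \<and> 4 \<in> K \<and> 5 \<in> K \<and> 6 \<in> K)" by (rule prop_cov[OF e0 e1 e2 e3 e4 e5 e6 e7 e8 e9 e10 e11 e12 e13 z])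
  then show False
  proof (elim disjE)
    assume "1 \<in> K \<and> 2 \<in> K \<and> 3 \<in> K \<and> 4 \<in> K \<and> 5 \<in> K"
    then have "{1,2,3,4,5} \<subseteq> K" by simp
    from card_mono[OF finK this] cK show False by simp
  next
    assume "1 \<in> K \<and> 2 \<in> K \<and> 3 \<in> K \<and> 4 \<in> K \<and> 6 \<in> K"
    then have "{1,2,3,4,6} \<subseteq> K" by simp
    from card_mono[OF finK this] cK show False by simp
  next
    assume "1 \<in> K \<and> 2 \<in> K \<and> 3 \<in> K \<and> 5 \<in> K \<and> 6 \<in> K"
    then have "{1,2,3,5,6} \<subseteq> K" by simp
    from card_mono[OF finK this] cK show False by simp
  next
    assume "1 \<in> K \<and> 2 \<in> K \<and> 4 \<in> K \<and> 5 \<in> K \<and> 6 \<in> K"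
    then have "{1,2,4,5,6} \<subseteq> K" by simp
    from card_mono[OF finK this] cK show False by simp
  next
    assume "1 \<in> K \<and> 3 \<in> K \<and> 4 \<in> K \<and> 5 \<in> K \<and> 6 \<in> K"
    then have "{1,3,4,5,6} \<subseteq> K" by simp
    from card_mono[OF finK this] cK show False by simp
  next
    assume "2 \<in> K \<and> 3 \<in> K \<and> 4 \<in> K \<and> 5 \<in> K \<and> 6 \<in> K"
    then have "{2,3,4,5,6} \<subseteq> K" by simp
    from card_mono[OF finK this] cK show False by simp
  qed
qed



lemma Q_mem: "{x,y} \<in> Q \<longleftrightarrow> (x,y) \<in> {(1,2),(2,3),(3,4),(0,4),(0,5),(1,6),(2,7),(3,8),(4,9),(5,7),(6,8),(7,9),(5,8),(6,9),
   (2,1),(3,2),(4,3),(4,0),(5,0),(6,1),(7,2),(8,3),(9,4),(7,5),(8,6),(9,7),(8,5),(9,6)}"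
  unfolding Q_expl by (auto simp: doubleton_eq_iff)

lemma Q_elem: "e \<in> Q \<Longrightarrow> \<exists>x y. e = {x,y} \<and> x \<noteq> y \<and> x < 10 \<and> y < 10"
  unfolding Q_expl apply (elim insertE emptyE) apply (rule exI, rule exI, rule conjI, assumption, simp)+ done

lemma Q_props: "{x,y} \<in> Q \<Longrightarrow> x \<noteq> y \<and> x < 10 \<and> y < 10"
  unfolding Q_mem by auto

lemma G_mem: "e \<in> G_edges \<longleftrightarrow> (\<exists>j a b. j < 9 \<and> {a,b} \<in> Q \<and> e = {(j,a),(j,b)}) \<or> (\<exists>j. j < 9 \<and> e = {(j,1),((j+1) mod 9,0)})"
proof
  assume "e \<in> G_edges"
  then consider (a) j e' where "j < 9" "e' \<in> Q" "e = (\<lambda>x. (j,x)) ` e'" | (b) j where "j<9" "e = {(j,1),((j+1) mod 9,0)}"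
    unfolding G_edges_def Q_def[symmetric] by blast
  then show "(\<exists>j a b. j < 9 \<and> {a,b} \<in> Q \<and> e = {(j,a),(j,b)}) \<or> (\<exists>j. j < 9 \<and> e = {(j,1),((j+1) mod 9,0)})"
  proof cases
    case a
    then obtain x y where "e' = {x,y}" using Q_elem by blast
    then show ?thesis using a by auto
  next
    case b then show ?thesis by auto
  qed
next
  assume "(\<exists>j a b. j < 9 \<and> {a,b} \<in> Q \<and> e = {(j,a),(j,b)}) \<or> (\<exists>j. j < 9 \<and> e = {(j,1),((j+1) mod 9,0)})"
  then show "e \<in> G_edges"
  proof
    assume "\<exists>j a b. j < 9 \<and> {a,b} \<in> Q \<and> e = {(j,a),(j,b)}"
    then obtain j a b where "j < 9" "{a,b} \<in> Q" "e = (\<lambda>x. (j,x)) ` {a,b}" by auto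
    then show ?thesis unfolding G_edges_def Q_def[symmetric] by blast
  next
    assume "\<exists>j. j < 9 \<and> e = {(j,1),((j+1) mod 9,0)}"
    then show ?thesis unfolding G_edges_def by blast
  qed
qed

lemma pair_mem: "{(i,x),(j,y)} \<in> G_edges \<longleftrightarrow> (i = j \<and> i < 9 \<and> {x,y} \<in> Q) \<or>
   (i < 9 \<and> x = 1 \<and> y = 0 \<and> j = (i+1) mod 9) \<or> (j < 9 \<and> y = 1 \<and> x = 0 \<and> i = (j+1) mod 9)"
  unfolding G_mem doubleton_eq_iff prod.inject
  apply (simp add: insert_commute)
  apply (auto simp: insert_commute)
  done


lemma G_props: "e \<in> G_edges \<Longrightarrow> \<exists>u w. e = {u,w} \<and> u \<noteq> w \<and> u \<in> G_vertices \<and> w \<in> G_vertices"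
  unfolding G_mem G_vertices_def using Q_props by fastforce

lemma G_doubleton: "\<forall>e\<in>G_edges. \<exists>u w. e = {u,w}"
  using G_props by blast

lemma simple: "simple_graph G_vertices G_edges"
  unfolding simple_graph_def using G_props by (auto simp: G_vertices_def)

lemma cardV: "card G_vertices = 90"
  unfolding G_vertices_def card_cartesian_product by simp

lemma degree_nbr: assumes "\<forall>e\<in>E. \<exists>u w. e = {u,w}" shows "degree E v = card {w. {v,w} \<in> E}"
proof -
  have "{e\<in>E. v\<in>e} = (\<lambda>w. {v,w}) ` {w. {v,w}\<in>E}"
  proof (rule set_eqI, rule iffI)
    fix e assume "e \<in> {e\<in>E. v\<in>e}"
    then have e1: "e \<in> E" "v \<in> e" by auto
    from assms e1(1) obtain u w where e3: "e = {u,w}" by blast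
    have "v = u \<or> v = w" using e1(2) e3 by simp
    then have z: "e = {v,w} \<or> e = {v,u}" using e3 by (auto simp: insert_commute)
    then show "e \<in> (\<lambda>w. {v,w}) ` {w. {v,w}\<in>E}" using e1(1) by auto
  next
    fix e assume "e \<in> (\<lambda>w. {v,w}) ` {w. {v,w}\<in>E}"
    then show "e \<in> {e\<in>E. v\<in>e}" by auto
  qed
  moreover have "inj_on (\<lambda>w. {v,w}) {w. {v,w}\<in>E}"
    by (rule inj_onI) (auto simp: doubleton_eq_iff)
  ultimately show ?thesis unfolding degree_def by (simp add: card_image)
qed

lemma less9: "j < (9::nat) \<Longrightarrow> j=0 \<or> j=1 \<or> j=2 \<or> j=3 \<or> j=4 \<or> j=5 \<or> j=6 \<or> j=7 \<or> j=8" by arith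
lemma modl3: "j < (9::nat) \<Longrightarrow> (Suc j mod 9 + 8) mod 9 = j" by (drule less9) (elim disjE; simp)
lemma modl4: "j < (9::nat) \<Longrightarrow> Suc ((j + 8) mod 9) mod 9 = j" by (drule less9) (elim disjE; simp)
lemma modl5: "(j + 8) mod 9 \<noteq> (j::nat) \<and> Suc j mod 9 \<noteq> j"
proof
  show "(j + 8) mod 9 \<noteq> j"
  proof
    assume h: "(j + 8) mod 9 = j"
    have "j < 9" by (subst h[symmetric]) simp
    then show False using h by (drule_tac less9) (elim disjE; simp)
  qed
  show "Suc j mod 9 \<noteq> j"
  proof
    assume h: "Suc j mod 9 = j"
    have "j < 9" by (subst h[symmetric]) simp
    then show False using h by (drule_tac less9) (elim disjE; simp)
  qed
qed


lemma nb0: assumes "i < 9" shows "{w. {(i,0::nat),w} \<in> G_edges} = {(i,4),(i,5),((i+8) mod 9,1)}"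
proof (rule set_eqI)
  fix w :: "nat \<times> nat"
  obtain j y where w: "w = (j,y)" by force
  show "w \<in> {w. {(i,0),w} \<in> G_edges} \<longleftrightarrow> w \<in> {(i,4),(i,5),((i+8) mod 9,1)}"
    unfolding w using assms by (auto simp: pair_mem Q_mem modl3 modl4 modl5)
qed

lemma nb1: assumes "i < 9" shows "{w. {(i,1::nat),w} \<in> G_edges} = {(i,2),(i,6),((i+1) mod 9,0)}"
proof (rule set_eqI)
  fix w :: "nat \<times> nat"
  obtain j y where w: "w = (j,y)" by force
  show "w \<in> {w. {(i,1),w} \<in> G_edges} \<longleftrightarrow> w \<in> {(i,2),(i,6),((i+1) mod 9,0)}"
    unfolding w using assms by (auto simp: pair_mem Q_mem modl3 modl4 modl5)
qed

lemma nb2: assumes "i < 9" shows "{w. {(i,2::nat),w} \<in> G_edges} = {(i,1),(i,3),(i,7)}"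
proof (rule set_eqI)
  fix w :: "nat \<times> nat"
  obtain j y where w: "w = (j,y)" by force
  show "w \<in> {w. {(i,2),w} \<in> G_edges} \<longleftrightarrow> w \<in> {(i,1),(i,3),(i,7)}"
    unfolding w using assms by (auto simp: pair_mem Q_mem modl3 modl4 modl5)
qed

lemma nb3: assumes "i < 9" shows "{w. {(i,3::nat),w} \<in> G_edges} = {(i,2),(i,4),(i,8)}"
proof (rule set_eqI)
  fix w :: "nat \<times> nat"
  obtain j y where w: "w = (j,y)" by force
  show "w \<in> {w. {(i,3),w} \<in> G_edges} \<longleftrightarrow> w \<in> {(i,2),(i,4),(i,8)}"
    unfolding w using assms by (auto simp: pair_mem Q_mem modl3 modl4 modl5)
qed

lemma nb4: assumes "i < 9" shows "{w. {(i,4::nat),w} \<in> G_edges} = {(i,3),(i,0),(i,9)}"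
proof (rule set_eqI)
  fix w :: "nat \<times> nat"
  obtain j y where w: "w = (j,y)" by force
  show "w \<in> {w. {(i,4),w} \<in> G_edges} \<longleftrightarrow> w \<in> {(i,3),(i,0),(i,9)}"
    unfolding w using assms by (auto simp: pair_mem Q_mem modl3 modl4 modl5)
qed

lemma nb5: assumes "i < 9" shows "{w. {(i,5::nat),w} \<in> G_edges} = {(i,0),(i,7),(i,8)}"
proof (rule set_eqI)
  fix w :: "nat \<times> nat"
  obtain j y where w: "w = (j,y)" by force
  show "w \<in> {w. {(i,5),w} \<in> G_edges} \<longleftrightarrow> w \<in> {(i,0),(i,7),(i,8)}"
    unfolding w using assms by (auto simp: pair_mem Q_mem modl3 modl4 modl5)
qed

lemma nb6: assumes "i < 9" shows "{w. {(i,6::nat),w} \<in> G_edges} = {(i,1),(i,8),(i,9)}"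
proof (rule set_eqI)
  fix w :: "nat \<times> nat"
  obtain j y where w: "w = (j,y)" by force
  show "w \<in> {w. {(i,6),w} \<in> G_edges} \<longleftrightarrow> w \<in> {(i,1),(i,8),(i,9)}"
    unfolding w using assms by (auto simp: pair_mem Q_mem modl3 modl4 modl5)
qed

lemma nb7: assumes "i < 9" shows "{w. {(i,7::nat),w} \<in> G_edges} = {(i,2),(i,5),(i,9)}"
proof (rule set_eqI)
  fix w :: "nat \<times> nat"
  obtain j y where w: "w = (j,y)" by force
  show "w \<in> {w. {(i,7),w} \<in> G_edges} \<longleftrightarrow> w \<in> {(i,2),(i,5),(i,9)}"
    unfolding w using assms by (auto simp: pair_mem Q_mem modl3 modl4 modl5)
qed

lemma nb8: assumes "i < 9" shows "{w. {(i,8::nat),w} \<in> G_edges} = {(i,3),(i,6),(i,5)}"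
proof (rule set_eqI)
  fix w :: "nat \<times> nat"
  obtain j y where w: "w = (j,y)" by force
  show "w \<in> {w. {(i,8),w} \<in> G_edges} \<longleftrightarrow> w \<in> {(i,3),(i,6),(i,5)}"
    unfolding w using assms by (auto simp: pair_mem Q_mem modl3 modl4 modl5)
qed

lemma nb9: assumes "i < 9" shows "{w. {(i,9::nat),w} \<in> G_edges} = {(i,4),(i,7),(i,6)}"
proof (rule set_eqI)
  fix w :: "nat \<times> nat"
  obtain j y where w: "w = (j,y)" by force
  show "w \<in> {w. {(i,9),w} \<in> G_edges} \<longleftrightarrow> w \<in> {(i,4),(i,7),(i,6)}"
    unfolding w using assms by (auto simp: pair_mem Q_mem modl3 modl4 modl5)
qed

lemma dg0: assumes "i < 9" shows "degree G_edges (i,0) = 3"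
  unfolding degree_nbr[OF G_doubleton] nb0[OF assms] by simp
lemma dg1: assumes "i < 9" shows "degree G_edges (i,1) = 3"
  unfolding degree_nbr[OF G_doubleton] nb1[OF assms] by simp
lemma dg2: assumes "i < 9" shows "degree G_edges (i,2) = 3"
  unfolding degree_nbr[OF G_doubleton] nb2[OF assms] by simp
lemma dg3: assumes "i < 9" shows "degree G_edges (i,3) = 3"
  unfolding degree_nbr[OF G_doubleton] nb3[OF assms] by simp
lemma dg4: assumes "i < 9" shows "degree G_edges (i,4) = 3"
  unfolding degree_nbr[OF G_doubleton] nb4[OF assms] by simp
lemma dg5: assumes "i < 9" shows "degree G_edges (i,5) = 3"
  unfolding degree_nbr[OF G_doubleton] nb5[OF assms] by simp
lemma dg6: assumes "i < 9" shows "degree G_edges (i,6) = 3"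
  unfolding degree_nbr[OF G_doubleton] nb6[OF assms] by simp
lemma dg7: assumes "i < 9" shows "degree G_edges (i,7) = 3"
  unfolding degree_nbr[OF G_doubleton] nb7[OF assms] by simp
lemma dg8: assumes "i < 9" shows "degree G_edges (i,8) = 3"
  unfolding degree_nbr[OF G_doubleton] nb8[OF assms] by simp
lemma dg9: assumes "i < 9" shows "degree G_edges (i,9) = 3"
  unfolding degree_nbr[OF G_doubleton] nb9[OF assms] by simp
lemma deg3: assumes "i < 9" "x < 10" shows "degree G_edges (i,x) = 3"
proof -
  have "x = 0 \<or> x = 1 \<or> x = 2 \<or> x = 3 \<or> x = 4 \<or> x = 5 \<or> x = 6 \<or> x = 7 \<or> x = 8 \<or> x = 9" using assms(2) by arith
  then show ?thesis using dg0 dg1 dg2 dg3 dg4 dg5 dg6 dg7 dg8 dg9 assms(1) by blast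
qed

lemma cubic: "cubic G_vertices G_edges"
  unfolding cubic_def G_vertices_def using deg3 by auto

fun chain :: "'a set set \<Rightarrow> 'a list \<Rightarrow> bool" where
  "chain E (x # y # xs) = ({x,y} \<in> E \<and> chain E (y # xs))"
| "chain E _ = True"

lemma chain_reach: "chain E (x # xs) \<Longrightarrow> (x, last (x # xs)) \<in> (adj_rel E)\<^sup>*"
proof (induction xs arbitrary: x)
  case Nil then show ?case by simp
next
  case (Cons y ys)
  then have "{x,y} \<in> E" "chain E (y # ys)" by auto
  then have "(x,y) \<in> adj_rel E" "(y, last (y # ys)) \<in> (adj_rel E)\<^sup>*" using Cons.IH by (auto simp: adj_rel_def)
  then show ?case by (simp add: converse_rtrancl_into_rtrancl)
qed

lemma adj_sym: "(x,y) \<in> (adj_rel E)\<^sup>* \<Longrightarrow> (y,x) \<in> (adj_rel E)\<^sup>*"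
proof -
  assume "(x,y) \<in> (adj_rel E)\<^sup>*"
  then have "(y,x) \<in> ((adj_rel E)\<inverse>)\<^sup>*" by (rule rtrancl_converseI)
  moreover have "(adj_rel E)\<inverse> = adj_rel E" by (auto simp: adj_rel_def insert_commute)
  ultimately show ?thesis by simp
qed

lemma qp_1_2: "(1::nat,2) \<in> (adj_rel (Q - {{1,2}}))\<^sup>*"
  using chain_reach[of "Q - {{1,2}}" 1 "[6,8,3,2]"] by (simp add: Q_mem doubleton_eq_iff)
lemma qp_2_1: "(2::nat,1) \<in> (adj_rel (Q - {{2,1}}))\<^sup>*"
  using chain_reach[of "Q - {{2,1}}" 2 "[3,8,6,1]"] by (simp add: Q_mem doubleton_eq_iff)
lemma qp_2_3: "(2::nat,3) \<in> (adj_rel (Q - {{2,3}}))\<^sup>*"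
  using chain_reach[of "Q - {{2,3}}" 2 "[1,6,8,3]"] by (simp add: Q_mem doubleton_eq_iff)
lemma qp_3_2: "(3::nat,2) \<in> (adj_rel (Q - {{3,2}}))\<^sup>*"
  using chain_reach[of "Q - {{3,2}}" 3 "[4,9,7,2]"] by (simp add: Q_mem doubleton_eq_iff)
lemma qp_3_4: "(3::nat,4) \<in> (adj_rel (Q - {{3,4}}))\<^sup>*"
  using chain_reach[of "Q - {{3,4}}" 3 "[2,7,9,4]"] by (simp add: Q_mem doubleton_eq_iff)
lemma qp_4_3: "(4::nat,3) \<in> (adj_rel (Q - {{4,3}}))\<^sup>*"
  using chain_reach[of "Q - {{4,3}}" 4 "[0,5,8,3]"] by (simp add: Q_mem doubleton_eq_iff)
lemma qp_0_4: "(0::nat,4) \<in> (adj_rel (Q - {{0,4}}))\<^sup>*"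
  using chain_reach[of "Q - {{0,4}}" 0 "[5,7,9,4]"] by (simp add: Q_mem doubleton_eq_iff)
lemma qp_4_0: "(4::nat,0) \<in> (adj_rel (Q - {{4,0}}))\<^sup>*"
  using chain_reach[of "Q - {{4,0}}" 4 "[3,8,5,0]"] by (simp add: Q_mem doubleton_eq_iff)
lemma qp_0_5: "(0::nat,5) \<in> (adj_rel (Q - {{0,5}}))\<^sup>*"
  using chain_reach[of "Q - {{0,5}}" 0 "[4,3,8,5]"] by (simp add: Q_mem doubleton_eq_iff)
lemma qp_5_0: "(5::nat,0) \<in> (adj_rel (Q - {{5,0}}))\<^sup>*"
  using chain_reach[of "Q - {{5,0}}" 5 "[7,9,4,0]"] by (simp add: Q_mem doubleton_eq_iff)
lemma qp_1_6: "(1::nat,6) \<in> (adj_rel (Q - {{1,6}}))\<^sup>*"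
  using chain_reach[of "Q - {{1,6}}" 1 "[2,3,8,6]"] by (simp add: Q_mem doubleton_eq_iff)
lemma qp_6_1: "(6::nat,1) \<in> (adj_rel (Q - {{6,1}}))\<^sup>*"
  using chain_reach[of "Q - {{6,1}}" 6 "[8,3,2,1]"] by (simp add: Q_mem doubleton_eq_iff)
lemma qp_2_7: "(2::nat,7) \<in> (adj_rel (Q - {{2,7}}))\<^sup>*"
  using chain_reach[of "Q - {{2,7}}" 2 "[1,6,9,7]"] by (simp add: Q_mem doubleton_eq_iff)
lemma qp_7_2: "(7::nat,2) \<in> (adj_rel (Q - {{7,2}}))\<^sup>*"
  using chain_reach[of "Q - {{7,2}}" 7 "[5,8,3,2]"] by (simp add: Q_mem doubleton_eq_iff)
lemma qp_3_8: "(3::nat,8) \<in> (adj_rel (Q - {{3,8}}))\<^sup>*"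
  using chain_reach[of "Q - {{3,8}}" 3 "[2,1,6,8]"] by (simp add: Q_mem doubleton_eq_iff)
lemma qp_8_3: "(8::nat,3) \<in> (adj_rel (Q - {{8,3}}))\<^sup>*"
  using chain_reach[of "Q - {{8,3}}" 8 "[6,1,2,3]"] by (simp add: Q_mem doubleton_eq_iff)
lemma qp_4_9: "(4::nat,9) \<in> (adj_rel (Q - {{4,9}}))\<^sup>*"
  using chain_reach[of "Q - {{4,9}}" 4 "[3,2,7,9]"] by (simp add: Q_mem doubleton_eq_iff)
lemma qp_9_4: "(9::nat,4) \<in> (adj_rel (Q - {{9,4}}))\<^sup>*"
  using chain_reach[of "Q - {{9,4}}" 9 "[7,2,3,4]"] by (simp add: Q_mem doubleton_eq_iff)
lemma qp_5_7: "(5::nat,7) \<in> (adj_rel (Q - {{5,7}}))\<^sup>*"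
  using chain_reach[of "Q - {{5,7}}" 5 "[0,4,9,7]"] by (simp add: Q_mem doubleton_eq_iff)
lemma qp_7_5: "(7::nat,5) \<in> (adj_rel (Q - {{7,5}}))\<^sup>*"
  using chain_reach[of "Q - {{7,5}}" 7 "[2,3,8,5]"] by (simp add: Q_mem doubleton_eq_iff)
lemma qp_6_8: "(6::nat,8) \<in> (adj_rel (Q - {{6,8}}))\<^sup>*"
  using chain_reach[of "Q - {{6,8}}" 6 "[1,2,3,8]"] by (simp add: Q_mem doubleton_eq_iff)
lemma qp_8_6: "(8::nat,6) \<in> (adj_rel (Q - {{8,6}}))\<^sup>*"
  using chain_reach[of "Q - {{8,6}}" 8 "[3,2,1,6]"] by (simp add: Q_mem doubleton_eq_iff)
lemma qp_7_9: "(7::nat,9) \<in> (adj_rel (Q - {{7,9}}))\<^sup>*"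
  using chain_reach[of "Q - {{7,9}}" 7 "[2,1,6,9]"] by (simp add: Q_mem doubleton_eq_iff)
lemma qp_9_7: "(9::nat,7) \<in> (adj_rel (Q - {{9,7}}))\<^sup>*"
  using chain_reach[of "Q - {{9,7}}" 9 "[4,3,2,7]"] by (simp add: Q_mem doubleton_eq_iff)
lemma qp_5_8: "(5::nat,8) \<in> (adj_rel (Q - {{5,8}}))\<^sup>*"
  using chain_reach[of "Q - {{5,8}}" 5 "[0,4,3,8]"] by (simp add: Q_mem doubleton_eq_iff)
lemma qp_8_5: "(8::nat,5) \<in> (adj_rel (Q - {{8,5}}))\<^sup>*"
  using chain_reach[of "Q - {{8,5}}" 8 "[3,2,7,5]"] by (simp add: Q_mem doubleton_eq_iff)
lemma qp_6_9: "(6::nat,9) \<in> (adj_rel (Q - {{6,9}}))\<^sup>*"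
  using chain_reach[of "Q - {{6,9}}" 6 "[1,2,7,9]"] by (simp add: Q_mem doubleton_eq_iff)
lemma qp_9_6: "(9::nat,6) \<in> (adj_rel (Q - {{9,6}}))\<^sup>*"
  using chain_reach[of "Q - {{9,6}}" 9 "[4,3,8,6]"] by (simp add: Q_mem doubleton_eq_iff)
lemma qpath: assumes "{a,b} \<in> Q" shows "(a,b) \<in> (adj_rel (Q - {{a,b}}))\<^sup>*"
proof -
  have "(a,b) \<in> {(1,2),(2,3),(3,4),(0,4),(0,5),(1,6),(2,7),(3,8),(4,9),(5,7),(6,8),(7,9),(5,8),(6,9),
   (2,1),(3,2),(4,3),(4,0),(5,0),(6,1),(7,2),(8,3),(9,4),(7,5),(8,6),(9,7),(8,5),(9,6)}" using Q_mem[THEN iffD1, OF assms] .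
  then show ?thesis by (elim insertE emptyE; simp only: prod.inject; elim conjE; simp only: qp_1_2 qp_2_1 qp_2_3 qp_3_2 qp_3_4 qp_4_3 qp_0_4 qp_4_0 qp_0_5 qp_5_0 qp_1_6 qp_6_1 qp_2_7 qp_7_2 qp_3_8 qp_8_3 qp_4_9 qp_9_4 qp_5_7 qp_7_5 qp_6_8 qp_8_6 qp_7_9 qp_9_7 qp_5_8 qp_8_5 qp_6_9 qp_9_6)
qed



lemma lift: assumes "(x,y) \<in> (adj_rel F)\<^sup>*" and "\<And>a b. {a,b} \<in> F \<Longrightarrow> {(k,a),(k,b)} \<in> E"
  shows "((k,x),(k,y)) \<in> (adj_rel E)\<^sup>*"
  using assms(1)
proof (induction rule: rtrancl_induct)
  case base then show ?case by simp
next
  case (step y z)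
  then have "{(k,y),(k,z)} \<in> E" using assms(2) by (simp add: adj_rel_def)
  then have "((k,y),(k,z)) \<in> adj_rel E" by (simp add: adj_rel_def)
  with step.IH show ?case by (rule rtrancl_into_rtrancl)
qed

lemma internal_bridge: assumes "k < 9" "{a,b} \<in> Q"
  shows "((k,a),(k,b)) \<in> (adj_rel (G_edges - {{(k,a),(k,b)}}))\<^sup>*"
proof (rule lift[OF qpath[OF assms(2)]])
  fix c d assume h: "{c,d} \<in> Q - {{a,b}}"
  then have "{(k,c),(k,d)} \<in> G_edges" using assms(1) by (simp add: pair_mem)
  moreover have "{(k,c),(k,d)} \<noteq> {(k,a),(k,b)}" using h by (auto simp: doubleton_eq_iff)
  ultimately show "{(k,c),(k,d)} \<in> G_edges - {{(k,a),(k,b)}}" by simp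
qed

lemma cb0: "((0::nat,1::nat),((0+1) mod 9,0::nat)) \<in> (adj_rel (G_edges - {{(0,1),((0+1) mod 9,0)}}))\<^sup>*"
  using chain_reach[of "G_edges - {{(0,1),((0+1) mod 9,0)}}" "(0,1)" "[(0,2),(0,3),(0,4),(0,0),(8,1),(8,2),(8,3),(8,4),(8,0),(7,1),(7,2),(7,3),(7,4),(7,0),(6,1),(6,2),(6,3),(6,4),(6,0),(5,1),(5,2),(5,3),(5,4),(5,0),(4,1),(4,2),(4,3),(4,4),(4,0),(3,1),(3,2),(3,3),(3,4),(3,0),(2,1),(2,2),(2,3),(2,4),(2,0),(1,1),(1,2),(1,3),(1,4),(1,0)]"] by (simp add: pair_mem Q_mem doubleton_eq_iff)
lemma cb1: "((1::nat,1::nat),((1+1) mod 9,0::nat)) \<in> (adj_rel (G_edges - {{(1,1),((1+1) mod 9,0)}}))\<^sup>*"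
  using chain_reach[of "G_edges - {{(1,1),((1+1) mod 9,0)}}" "(1,1)" "[(1,2),(1,3),(1,4),(1,0),(0,1),(0,2),(0,3),(0,4),(0,0),(8,1),(8,2),(8,3),(8,4),(8,0),(7,1),(7,2),(7,3),(7,4),(7,0),(6,1),(6,2),(6,3),(6,4),(6,0),(5,1),(5,2),(5,3),(5,4),(5,0),(4,1),(4,2),(4,3),(4,4),(4,0),(3,1),(3,2),(3,3),(3,4),(3,0),(2,1),(2,2),(2,3),(2,4),(2,0)]"] by (simp add: pair_mem Q_mem doubleton_eq_iff numeral_2_eq_2)
lemma cb2: "((2::nat,1::nat),((2+1) mod 9,0::nat)) \<in> (adj_rel (G_edges - {{(2,1),((2+1) mod 9,0)}}))\<^sup>*"
  using chain_reach[of "G_edges - {{(2,1),((2+1) mod 9,0)}}" "(2,1)" "[(2,2),(2,3),(2,4),(2,0),(1,1),(1,2),(1,3),(1,4),(1,0),(0,1),(0,2),(0,3),(0,4),(0,0),(8,1),(8,2),(8,3),(8,4),(8,0),(7,1),(7,2),(7,3),(7,4),(7,0),(6,1),(6,2),(6,3),(6,4),(6,0),(5,1),(5,2),(5,3),(5,4),(5,0),(4,1),(4,2),(4,3),(4,4),(4,0),(3,1),(3,2),(3,3),(3,4),(3,0)]"] by (simp add: pair_mem Q_mem doubleton_eq_iff)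
lemma cb3: "((3::nat,1::nat),((3+1) mod 9,0::nat)) \<in> (adj_rel (G_edges - {{(3,1),((3+1) mod 9,0)}}))\<^sup>*"
  using chain_reach[of "G_edges - {{(3,1),((3+1) mod 9,0)}}" "(3,1)" "[(3,2),(3,3),(3,4),(3,0),(2,1),(2,2),(2,3),(2,4),(2,0),(1,1),(1,2),(1,3),(1,4),(1,0),(0,1),(0,2),(0,3),(0,4),(0,0),(8,1),(8,2),(8,3),(8,4),(8,0),(7,1),(7,2),(7,3),(7,4),(7,0),(6,1),(6,2),(6,3),(6,4),(6,0),(5,1),(5,2),(5,3),(5,4),(5,0),(4,1),(4,2),(4,3),(4,4),(4,0)]"] by (simp add: pair_mem Q_mem doubleton_eq_iff)
lemma cb4: "((4::nat,1::nat),((4+1) mod 9,0::nat)) \<in> (adj_rel (G_edges - {{(4,1),((4+1) mod 9,0)}}))\<^sup>*"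
  using chain_reach[of "G_edges - {{(4,1),((4+1) mod 9,0)}}" "(4,1)" "[(4,2),(4,3),(4,4),(4,0),(3,1),(3,2),(3,3),(3,4),(3,0),(2,1),(2,2),(2,3),(2,4),(2,0),(1,1),(1,2),(1,3),(1,4),(1,0),(0,1),(0,2),(0,3),(0,4),(0,0),(8,1),(8,2),(8,3),(8,4),(8,0),(7,1),(7,2),(7,3),(7,4),(7,0),(6,1),(6,2),(6,3),(6,4),(6,0),(5,1),(5,2),(5,3),(5,4),(5,0)]"] by (simp add: pair_mem Q_mem doubleton_eq_iff)
lemma cb5: "((5::nat,1::nat),((5+1) mod 9,0::nat)) \<in> (adj_rel (G_edges - {{(5,1),((5+1) mod 9,0)}}))\<^sup>*"
  using chain_reach[of "G_edges - {{(5,1),((5+1) mod 9,0)}}" "(5,1)" "[(5,2),(5,3),(5,4),(5,0),(4,1),(4,2),(4,3),(4,4),(4,0),(3,1),(3,2),(3,3),(3,4),(3,0),(2,1),(2,2),(2,3),(2,4),(2,0),(1,1),(1,2),(1,3),(1,4),(1,0),(0,1),(0,2),(0,3),(0,4),(0,0),(8,1),(8,2),(8,3),(8,4),(8,0),(7,1),(7,2),(7,3),(7,4),(7,0),(6,1),(6,2),(6,3),(6,4),(6,0)]"] by (simp add: pair_mem Q_mem doubleton_eq_iff)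
lemma cb6: "((6::nat,1::nat),((6+1) mod 9,0::nat)) \<in> (adj_rel (G_edges - {{(6,1),((6+1) mod 9,0)}}))\<^sup>*"
  using chain_reach[of "G_edges - {{(6,1),((6+1) mod 9,0)}}" "(6,1)" "[(6,2),(6,3),(6,4),(6,0),(5,1),(5,2),(5,3),(5,4),(5,0),(4,1),(4,2),(4,3),(4,4),(4,0),(3,1),(3,2),(3,3),(3,4),(3,0),(2,1),(2,2),(2,3),(2,4),(2,0),(1,1),(1,2),(1,3),(1,4),(1,0),(0,1),(0,2),(0,3),(0,4),(0,0),(8,1),(8,2),(8,3),(8,4),(8,0),(7,1),(7,2),(7,3),(7,4),(7,0)]"] by (simp add: pair_mem Q_mem doubleton_eq_iff)
lemma cb7: "((7::nat,1::nat),((7+1) mod 9,0::nat)) \<in> (adj_rel (G_edges - {{(7,1),((7+1) mod 9,0)}}))\<^sup>*"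
  using chain_reach[of "G_edges - {{(7,1),((7+1) mod 9,0)}}" "(7,1)" "[(7,2),(7,3),(7,4),(7,0),(6,1),(6,2),(6,3),(6,4),(6,0),(5,1),(5,2),(5,3),(5,4),(5,0),(4,1),(4,2),(4,3),(4,4),(4,0),(3,1),(3,2),(3,3),(3,4),(3,0),(2,1),(2,2),(2,3),(2,4),(2,0),(1,1),(1,2),(1,3),(1,4),(1,0),(0,1),(0,2),(0,3),(0,4),(0,0),(8,1),(8,2),(8,3),(8,4),(8,0)]"] by (simp add: pair_mem Q_mem doubleton_eq_iff)
lemma cb8: "((8::nat,1::nat),((8+1) mod 9,0::nat)) \<in> (adj_rel (G_edges - {{(8,1),((8+1) mod 9,0)}}))\<^sup>*"
  using chain_reach[of "G_edges - {{(8,1),((8+1) mod 9,0)}}" "(8,1)" "[(8,2),(8,3),(8,4),(8,0),(7,1),(7,2),(7,3),(7,4),(7,0),(6,1),(6,2),(6,3),(6,4),(6,0),(5,1),(5,2),(5,3),(5,4),(5,0),(4,1),(4,2),(4,3),(4,4),(4,0),(3,1),(3,2),(3,3),(3,4),(3,0),(2,1),(2,2),(2,3),(2,4),(2,0),(1,1),(1,2),(1,3),(1,4),(1,0),(0,1),(0,2),(0,3),(0,4),(0,0)]"] by (simp add: pair_mem Q_mem doubleton_eq_iff)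
lemma cross_bridge: assumes "k < 9"
  shows "((k,1),((k+1) mod 9,0)) \<in> (adj_rel (G_edges - {{(k,1),((k+1) mod 9,0)}}))\<^sup>*"
  using less9[OF assms]
proof (elim disjE)
  assume "k = 0" then show ?thesis using cb0 by simp
  next
  assume "k = 1" then show ?thesis using cb1 by simp
  next
  assume "k = 2" then show ?thesis using cb2 by simp
  next
  assume "k = 3" then show ?thesis using cb3 by simp
  next
  assume "k = 4" then show ?thesis using cb4 by simp
  next
  assume "k = 5" then show ?thesis using cb5 by simp
  next
  assume "k = 6" then show ?thesis using cb6 by simp
  next
  assume "k = 7" then show ?thesis using cb7 by simp
  next
  assume "k = 8" then show ?thesis using cb8 by simp
qed

lemma bridgeless: "bridgeless G_vertices G_edges"
  unfolding bridgeless_def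
proof (intro allI impI)
  fix u v assume "{u,v} \<in> G_edges"
  then consider (a) k a b where "k < 9" "{a,b} \<in> Q" "{u,v} = {(k,a),(k,b)}"
    | (b) k where "k < 9" "{u,v} = {(k,1),((k+1) mod 9,0)}" unfolding G_mem by blast
  then show "(u,v) \<in> (adj_rel (G_edges - {{u,v}}))\<^sup>*"
  proof cases
    case a
    have ba: "{b,a} \<in> Q" using a(2) by (simp add: insert_commute)
    have ins: "{(k,b),(k,a)} = {(k,a),(k,b)}" by (rule insert_commute)
    have "(u = (k,a) \<and> v = (k,b)) \<or> (u = (k,b) \<and> v = (k,a))" using a(3) by (auto simp: doubleton_eq_iff)
    then show ?thesis
    proof
      assume "u = (k,a) \<and> v = (k,b)"
      then show ?thesis using internal_bridge[OF a(1) a(2)] a(3) by simp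
    next
      assume "u = (k,b) \<and> v = (k,a)"
      then show ?thesis using internal_bridge[OF a(1) ba] a(3) ins by simp
    qed
  next
    case b
    have ins: "{((k+1) mod 9,0),(k,1)} = {(k,1),((k+1) mod 9,0)}" by (rule insert_commute)
    have "(u = (k,1) \<and> v = ((k+1) mod 9,0)) \<or> (u = ((k+1) mod 9,0) \<and> v = (k,1))" using b(2) by (auto simp: doubleton_eq_iff)
    then show ?thesis
    proof
      assume "u = (k,1) \<and> v = ((k+1) mod 9,0)"
      then show ?thesis using cross_bridge[OF b(1)] b(2) by simp
    next
      assume "u = ((k+1) mod 9,0) \<and> v = (k,1)"
      then show ?thesis using adj_sym[OF cross_bridge[OF b(1)]] b(2) by simp
    qed
  qed
qed



lemma block_uncovered:
  assumes Ms1: "\<forall>M\<in>set Ms. k_matching 44 G_edges M" and Ms2: "\<Union>(set Ms) = G_edges"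
    and Ms3: "length Ms \<le> 4" and i: "i < 9"
  shows "\<exists>M\<in>set Ms. \<exists>x<10. (i,x) \<notin> \<Union>M"
proof (rule ccontr)
  assume "\<not> (\<exists>M\<in>set Ms. \<exists>x<10. (i,x) \<notin> \<Union>M)"
  then have cov: "\<And>M x. M \<in> set Ms \<Longrightarrow> x < 10 \<Longrightarrow> (i,x) \<in> \<Union>M" by blast
  define r where "r M = {e\<in>Q. Pair i ` e \<in> M}" for M :: "(nat \<times> nat) set set"
  define NN where "NN = r ` set Ms"
  have fin: "finite NN" by (simp add: NN_def)
  have cardN: "card NN \<le> 4"
    using card_image_le[OF finite_set, of r Ms] card_length[of Ms] Ms3 unfolding NN_def by linarith
  have injP: "inj (Pair i :: nat \<Rightarrow> nat \<times> nat)" by (rule injI) simp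
  have pm: "\<forall>N\<in>NN. N \<subseteq> Q \<and> (\<forall>e\<in>N. \<forall>f\<in>N. e \<noteq> f \<longrightarrow> e \<inter> f = {}) \<and> (\<forall>x\<in>{2..9}. \<exists>e\<in>N. x \<in> e)"
  proof
    fix N assume "N \<in> NN"
    then obtain M where M: "M \<in> set Ms" "N = r M" unfolding NN_def by blast
    have "matching G_edges M" using Ms1 M(1) unfolding k_matching_def by blast
    then have MG: "M \<subseteq> G_edges" and dis: "\<forall>e\<in>M. \<forall>f\<in>M. e \<noteq> f \<longrightarrow> e \<inter> f = {}"
      unfolding matching_def by auto
    have s1: "N \<subseteq> Q" using M(2) by (auto simp: r_def)
    have s2: "\<forall>e\<in>N. \<forall>f\<in>N. e \<noteq> f \<longrightarrow> e \<inter> f = {}"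
    proof (intro ballI impI)
      fix e f assume ef: "e \<in> N" "f \<in> N" "e \<noteq> f"
      then have em: "Pair i ` e \<in> M" and fm: "Pair i ` f \<in> M" using M(2) by (simp_all add: r_def)
      have "Pair i ` e \<noteq> Pair i ` f" using ef(3) injP by (simp add: inj_image_eq_iff)
      then have "Pair i ` e \<inter> Pair i ` f = {}" by (rule dis[rule_format, OF em fm])
      then have "Pair i ` (e \<inter> f) = {}" by (simp add: image_Int[OF injP])
      then show "e \<inter> f = {}" by simp
    qed
    have s3: "\<forall>x\<in>{2..9}. \<exists>e\<in>N. x \<in> e"
    proof
      fix x :: nat assume x: "x \<in> {2..9}"
      then have "(i,x) \<in> \<Union>M" using cov M(1) by auto
      then obtain g where g: "g \<in> M" "(i,x) \<in> g" by blast
      then have "g \<in> G_edges" using MG by blast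
      then consider (a) j a b where "j < 9" "{a,b} \<in> Q" "g = {(j,a),(j,b)}"
        | (b) j where "j < 9" "g = {(j,1),((j+1) mod 9,0)}" unfolding G_mem by blast
      then show "\<exists>e\<in>N. x \<in> e"
      proof cases
        case a
        then have "j = i" "x \<in> {a,b}" using g(2) by auto
        then have "Pair i ` {a,b} = g" using a by simp
        then have "{a,b} \<in> N" using a(2) g(1) M(2) r_def by simp
        then show ?thesis using \<open>x \<in> {a,b}\<close> by blast
      next
        case b
        then have "x = 1 \<or> x = 0" using g(2) by auto
        then show ?thesis using x by auto
      qed
    qed
    show "N \<subseteq> Q \<and> (\<forall>e\<in>N. \<forall>f\<in>N. e \<noteq> f \<longrightarrow> e \<inter> f = {}) \<and> (\<forall>x\<in>{2..9}. \<exists>e\<in>N. x \<in> e)"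
      using s1 s2 s3 by blast
  qed
  have covQ: "\<forall>e\<in>Q. \<exists>N\<in>NN. e \<in> N"
  proof
    fix e assume e: "e \<in> Q"
    then obtain a b where ab: "e = {a,b}" using Q_elem by blast
    have "{(i,a),(i,b)} \<in> G_edges" using e ab i by (simp add: pair_mem)
    then obtain M where M: "M \<in> set Ms" "{(i,a),(i,b)} \<in> M" using Ms2 by blast
    then have "e \<in> r M" using e ab r_def by simp
    then show "\<exists>N\<in>NN. e \<in> N" using M(1) NN_def by blast
  qed
  have zero: "\<exists>N\<in>NN. \<forall>e\<in>N. 0 \<notin> e"
  proof -
    define c where "c = {((i+8) mod 9,1),(i,0::nat)}"
    have "c \<in> G_edges" unfolding c_def pair_mem using i modl4 by simp
    then obtain M where M: "M \<in> set Ms" "c \<in> M" using Ms2 by blast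
    have dis: "\<forall>e\<in>M. \<forall>f\<in>M. e \<noteq> f \<longrightarrow> e \<inter> f = {}"
      using Ms1 M(1) unfolding k_matching_def matching_def by blast
    have "\<forall>e\<in>r M. 0 \<notin> e"
    proof (intro ballI notI)
      fix e assume e: "e \<in> r M" "0 \<in> e"
      then have em: "Pair i ` e \<in> M" by (simp add: r_def)
      have ne: "(i,0) \<in> Pair i ` e \<inter> c" using e(2) c_def by auto
      have "Pair i ` e = c"
      proof (rule ccontr)
        assume "Pair i ` e \<noteq> c"
        then have "Pair i ` e \<inter> c = {}" by (rule dis[rule_format, OF em M(2)])
        then show False using ne by simp
      qed
      then have "((i+8) mod 9, 1) \<in> Pair i ` e" unfolding c_def by auto
      then have "(i+8) mod 9 = i" by auto
      then show False using modl5 by simp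
    qed
    then show ?thesis using M(1) NN_def by blast
  qed
  show False using petersen_cover[OF fin cardN pm covQ zero] .
qed

lemma uncovered_card: assumes "k_matching 44 G_edges M" shows "card (G_vertices - \<Union>M) \<le> 2"
proof -
  have MG: "M \<subseteq> G_edges" and dis: "\<forall>e\<in>M. \<forall>f\<in>M. e \<noteq> f \<longrightarrow> e \<inter> f = {}" and cM: "card M = 44"
    using assms unfolding k_matching_def matching_def by auto
  have finM: "finite M" by (rule card_ge_0_finite) (simp add: cM)
  have c2: "card e = 2 \<and> e \<subseteq> G_vertices" if eM: "e \<in> M" for e
  proof -
    have "e \<in> G_edges" using MG eM by blast
    then obtain u w where "e = {u,w}" "u \<noteq> w" "u \<in> G_vertices" "w \<in> G_vertices" using G_props by blast
    then show ?thesis by simp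
  qed
  have "card (\<Union>M) = sum card M"
  proof (rule card_Union_disjoint)
    show "pairwise disjnt M" unfolding pairwise_def disjnt_def using dis by blast
    show "\<And>A. A \<in> M \<Longrightarrow> finite A" using c2 by (metis card.infinite zero_neq_numeral)
  qed
  also have "\<dots> = sum (\<lambda>e. 2) M" using c2 by (intro sum.cong) auto
  also have "\<dots> = 88" using cM by simp
  finally have cU: "card (\<Union>M) = 88" .
  have sub: "\<Union>M \<subseteq> G_vertices" using c2 by blast
  have finU: "finite (\<Union>M)" by (rule finite_subset[OF sub]) (simp add: G_vertices_def)
  have "card (G_vertices - \<Union>M) = card G_vertices - card (\<Union>M)" by (rule card_Diff_subset[OF finU sub])
  then show ?thesis using cU cardV by simp
qed

lemma excessive: "excessive_index 44 G_edges \<ge> 5"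
  unfolding excessive_index_def le_Inf_iff
proof
  fix y assume "y \<in> {enat t |t. \<exists>Ms :: (nat \<times> nat) set set list. length Ms = t \<and> (\<forall>M\<in>set Ms. k_matching 44 G_edges M) \<and> \<Union>(set Ms) = G_edges}"
  then obtain Ms :: "(nat \<times> nat) set set list" where y: "y = enat (length Ms)"
    and Ms1: "\<forall>M\<in>set Ms. k_matching 44 G_edges M" and Ms2: "\<Union>(set Ms) = G_edges" by blast
  show "5 \<le> y"
  proof (rule ccontr)
    assume "\<not> 5 \<le> y"
    then have Ms3: "length Ms \<le> 4" using y by simp
    define W where "W = (\<Union>M\<in>set Ms. G_vertices - \<Union>M)"
    have finV: "finite G_vertices" by (simp add: G_vertices_def)
    have finW: "finite W" using finV unfolding W_def by auto
    have "card W \<le> (\<Sum>M\<in>set Ms. card (G_vertices - \<Union>M))" unfolding W_def by (rule card_UN_le) simp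
    also have "\<dots> \<le> card (set Ms) * 2" using sum_bounded_above[of "set Ms" "\<lambda>M. card (G_vertices - \<Union>M)" 2] uncovered_card Ms1 by simp
    also have "\<dots> \<le> 8" using card_length[of Ms] Ms3 by linarith
    finally have cW: "card W \<le> 8" .
    have "\<forall>i\<in>{0..<9}. \<exists>w\<in>W. fst w = i"
    proof
      fix i :: nat assume "i \<in> {0..<9}"
      then have "i < 9" by simp
      then obtain M x where "M \<in> set Ms" "x < 10" "(i,x) \<notin> \<Union>M" using block_uncovered[OF Ms1 Ms2 Ms3] by blast
      moreover have "(i,x) \<in> G_vertices" using \<open>i < 9\<close> \<open>x < 10\<close> by (simp add: G_vertices_def)
      ultimately have "(i,x) \<in> W" unfolding W_def by blast
      then show "\<exists>w\<in>W. fst w = i" by force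
    qed
    then obtain f where f: "\<forall>i\<in>{0..<9}. f i \<in> W \<and> fst (f i) = i" by metis
    have "inj_on f {0..<9}" by (rule inj_onI) (metis f)
    then have "card (f ` {0..<9}) = 9" by (simp add: card_image)
    moreover have "f ` {0..<9} \<subseteq> W" using f by blast
    ultimately have "9 \<le> card W" using card_mono[OF finW] by metis
    then show False using cW by simp
  qed
qed

theorem mainTheorem8:
  shows "simple_graph G_vertices G_edges \<and> cubic G_vertices G_edges \<and>
         bridgeless G_vertices G_edges \<and> card G_vertices = 90 \<and>
         excessive_index 44 G_edges \<ge> 5"
  using simple cubic bridgeless cardV excessive by blast


end
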